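(* Let $D\in QH^*(G,\mathbb Z)$ and write $D=a+ib$ as a function on $\mathrm{Spec}\,R$ with real-valued functions $a,b$. Then $\overline D=a-ib$ as functions on $\mathrm{Spec}\,R$ (i.e. the positive function $r$ with $\overline D=r(a-ib)$ can be taken identically equal to $1$).
   Context: Let $0<k<n$ be integers, $l=n-k$, and $G=G(k,n)$ the Grassmannian of $k$-planes in $\mathbb C^n$. Schubert classes $S_\lambda$ of $G$ are indexed by Young diagrams $\lambda=(\lambda_1\ge\dots\ge\lambda_l\ge0)$ with $\lambda_1\le k$. $QH^*(G,\mathbb Z)$ denotes the small quantum cohomology ring of $G$ with the quantum parameter $q$ set equal to $1$, a free $\mathbb Z$-module with basis the Schubert classes, product denoted $*$. The operator $X\mapsto\overline X$ is defined on Schubert classes and extended $\mathbb Z$-linearly: for $\lambda$ let $d_\lambda$ be the largest $i$ with $\lambda_i\ge i$ ($0$ if none); then $\overline{S_\lambda}=S_\mu$ with $\mu_i=d_\lambda+k-\lambda_{d_\lambda-i+1}$ for $i\le d_\lambda$ and $\mu_i=d_\lambda-\lambda_{l-i+d_\lambda+1}$ for $i>d_\lambda$. Let $R=QH^*(G,\mathbb C)=QH^*(G,\mathbb Z)\otimes\mathbb C$. It is known that $R$ is a semisimple commutative $\mathbb C$-algebra, so $\mathrm{Spec}\,R$ is a finite set of reduced points and $R$ is identified with the algebra of $\mathbb C$-valued functions on $\mathrm{Spec}\,R$; each class $X$ thus gives a function $p\mapsto X(p)\in\mathbb C$, with $(X*Y)(p)=X(p)Y(p)$. *)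

theory Defs
  imports Complex_Main "Jordan_Normal_Form.Determinant"
begin

text \<open>Young diagrams indexing Schubert classes of G(k,n), l = n - k:
  lists (lambda_1,...,lambda_l) (stored 0-indexed) weakly decreasing with entries at most k.\<close>
definition young_diagrams :: "nat \<Rightarrow> nat \<Rightarrow> nat list set" where
  "young_diagrams k n = {lam. length lam = n - k \<and> sorted_wrt (\<ge>) lam \<and> (\<forall>a\<in>set lam. a \<le> k)}"

definition part :: "nat list \<Rightarrow> nat \<Rightarrow> nat" where
  "part lam i = lam ! (i - 1)"

definition durfee :: "nat list \<Rightarrow> nat" where
  "durfee lam = Max ({i \<in> {1..length lam}. part lam i \<ge> i} \<union> {0})"

definition bar_diagram :: "nat \<Rightarrow> nat \<Rightarrow> nat list \<Rightarrow> nat list" where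
  "bar_diagram k n lam =
     (let l = n - k; d = durfee lam in
      map (\<lambda>i. if i \<le> d then d + k - part lam (d - i + 1) else d - part lam (l - i + d + 1)) [1..<l+1])"

text \<open>Elements of QH^*(G,Z): integer coefficient functions on Young diagrams,
  X = sum over lam in the box of X(lam) S_lam (values outside the box are ignored).
  The bar operator, extended Z-linearly.\<close>
definition qh_bar :: "nat \<Rightarrow> nat \<Rightarrow> (nat list \<Rightarrow> int) \<Rightarrow> (nat list \<Rightarrow> int)" where
  "qh_bar k n D = (\<lambda>mu. \<Sum>lam\<in>{lam \<in> young_diagrams k n. bar_diagram k n lam = mu}. D lam)"

text \<open>Complete homogeneous symmetric functions h_j expressed in the elementary ones e_i
  via sum_i (-1)^i e_i h_(j-i) = 0 (j > 0), h_0 = 1.\<close>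
primrec h_list :: "(nat \<Rightarrow> complex) \<Rightarrow> nat \<Rightarrow> complex list" where
  "h_list e 0 = [1]"
| "h_list e (Suc j) = h_list e j @
     [\<Sum>i=1..Suc j. (-1) ^ (i + 1) * e i * (h_list e j ! (Suc j - i))]"

definition h_fun :: "(nat \<Rightarrow> complex) \<Rightarrow> nat \<Rightarrow> complex" where
  "h_fun e j = h_list e j ! j"

text \<open>Spec R, via the Siebert--Tian presentation (q = 1)
  QH^*(G) = Z[e_1,...,e_k]/(h_(l+1),...,h_(n-1), h_n + (-1)^k):
  a point is the tuple of values (e_1,...,e_k) of the generators; we encode it as
  e :: nat => complex with e 0 = 1 and e i = 0 for i > k.\<close>
definition qh_spec :: "nat \<Rightarrow> nat \<Rightarrow> (nat \<Rightarrow> complex) set" where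
  "qh_spec k n = {e. e 0 = 1 \<and> (\<forall>i>k. e i = 0) \<and>
      (\<forall>j\<in>{n - k + 1..<n}. h_fun e j = 0) \<and> h_fun e n + (-1) ^ k = 0}"

definition e_int :: "(nat \<Rightarrow> complex) \<Rightarrow> int \<Rightarrow> complex" where
  "e_int e m = (if m < 0 then 0 else e (nat m))"

text \<open>Value of the Schubert class S_lam at the point e: Giambelli formula
  S_lam = det (e_(lambda_i + j - i))_(1 \<le> i,j \<le> l).\<close>
definition schubert_val :: "nat \<Rightarrow> nat \<Rightarrow> nat list \<Rightarrow> (nat \<Rightarrow> complex) \<Rightarrow> complex" where
  "schubert_val k n lam e =
     det (mat (n - k) (n - k) (\<lambda>(i, j). e_int e (int (lam ! i) + int j - int i)))"

definition qh_eval :: "nat \<Rightarrow> nat \<Rightarrow> (nat list \<Rightarrow> int) \<Rightarrow> (nat \<Rightarrow> complex) \<Rightarrow> complex" where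
  "qh_eval k n X e = (\<Sum>lam\<in>young_diagrams k n. of_int (X lam) * schubert_val k n lam e)"

end

theory Submission imports Defs "HOL-Computational_Algebra.Fundamental_Theorem_Algebra" begin

lemma h_list_len: "length (h_list e j) = Suc j"
  by (induct j) auto

lemma h_list_nth: "i \<le> j \<Longrightarrow> h_list e j ! i = h_fun e i"
proof (induct j arbitrary: i)
  case 0 then show ?case by (simp add: h_fun_def)
next
  case (Suc j)
  show ?case
  proof (cases "i \<le> j")
    case True
    then show ?thesis using Suc by (simp add: nth_append h_list_len)
  next
    case False
    then have "i = Suc j" using Suc by auto
    then show ?thesis by (simp add: h_fun_def)
  qed
qed

lemma h_fun_0: "h_fun e 0 = 1" by (simp add: h_fun_def)

lemma h_fun_Suc: "h_fun e (Suc j) = (\<Sum>i=1..Suc j. (-1) ^ (i + 1) * e i * h_fun e (Suc j - i))"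
proof -
  have "h_fun e (Suc j) = (\<Sum>i=1..Suc j. (-1) ^ (i + 1) * e i * (h_list e j ! (Suc j - i)))"
    by (simp add: h_fun_def nth_append h_list_len)
  also have "\<dots> = (\<Sum>i=1..Suc j. (-1) ^ (i + 1) * e i * h_fun e (Suc j - i))"
    by (rule sum.cong) (auto simp: h_list_nth)
  finally show ?thesis .
qed

lemma map_poly_cnj_mult: "map_poly cnj (A * B) = map_poly cnj A * map_poly cnj (B :: complex poly)"
  by (rule poly_eq_poly_eq_iff[THEN iffD1]) (auto simp: fun_eq_iff)

lemma refl_conj:
  fixes P :: "complex poly"
  assumes "P \<noteq> 0" "\<And>y. poly P y = 0 \<Longrightarrow> cmod y = 1"
  shows "\<exists>K. reflect_poly P = smult K (map_poly cnj P)"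
using assms proof (induct "degree P" arbitrary: P)
  case 0
  then obtain a where P: "P = [:a:]" by (metis degree_eq_zeroE)
  with 0 have a: "a \<noteq> 0" by auto
  show ?case by (rule exI[of _ "a / cnj a"]) (use a in \<open>simp add: P map_poly_pCons\<close>)
next
  case (Suc m P)
  have "\<not> constant (poly P)" using Suc(2) by (simp add: constant_degree)
  then obtain y where y: "poly P y = 0" using fundamental_theorem_of_algebra by blast
  then obtain P1 where P: "P = [:-y,1:] * P1" by (metis dvdE poly_eq_0_iff_dvd)
  have P1: "P1 \<noteq> 0" using Suc(3) P by auto
  have "degree P = degree [:-y,1:] + degree P1" unfolding P by (rule degree_mult_eq) (use P1 in auto)
  then have dP1: "m = degree P1" using Suc(2) by simp
  have "\<And>z. poly P1 z = 0 \<Longrightarrow> cmod z = 1" using Suc(4) P by auto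
  from Suc(1)[OF dP1 P1 this] obtain K where K: "reflect_poly P1 = smult K (map_poly cnj P1)" by blast
  have cy: "cmod y = 1" using Suc(4) y by auto
  have yy: "y * cnj y = 1" using cy by (metis complex_norm_square mult.commute of_real_1 power_one)
  have r1: "reflect_poly [:-y,1:] = smult (-y) (map_poly cnj [:-y,1:])"
    using yy by (simp add: reflect_poly_def map_poly_pCons)
  have "reflect_poly P = reflect_poly [:-y,1:] * reflect_poly P1" unfolding P by (rule reflect_poly_mult)
  also have "\<dots> = smult (-y) (map_poly cnj [:-y,1:]) * smult K (map_poly cnj P1)" by (simp only: r1 K)
  also have "\<dots> = smult (-y*K) (map_poly cnj [:-y,1:] * map_poly cnj P1)"
    by (simp only: mult_smult_left mult_smult_right smult_smult mult.commute)
  also have "\<dots> = smult (-y*K) (map_poly cnj P)" unfolding P map_poly_cnj_mult ..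
  finally show ?case by blast
qed

lemma det_zero_row: assumes A: "A \<in> carrier_mat m m" and r: "r < m" and z: "\<And>j. j < m \<Longrightarrow> A $$ (r, j) = 0"
  shows "det A = 0"
proof -
  have "(\<Prod>i = 0..<m. A $$ (i, \<sigma> i)) = 0" if "\<sigma> permutes {0..<m}" for \<sigma>
    using r z[of "\<sigma> r"] permutes_in_image[OF that, of r] by (intro prod_zero bexI[of _ r]) auto
  then show ?thesis unfolding det_def'[OF A] by simp
qed

lemma det_scale_rows: assumes A: "A \<in> carrier_mat m m"
  shows "det (mat m m (\<lambda>(i,j). c i * A $$ (i,j))) = prod c {0..<m} * det A"
proof -
  have B: "mat m m (\<lambda>(i,j). c i * A $$ (i,j)) \<in> carrier_mat m m" by simp
  show ?thesis unfolding det_def'[OF A] det_def'[OF B] sum_distrib_left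
  proof (rule sum.cong)
    fix \<sigma> assume s: "\<sigma> \<in> {\<sigma>. \<sigma> permutes {0..<m}}"
    have "(\<Prod>i = 0..<m. mat m m (\<lambda>(i,j). c i * A $$ (i,j)) $$ (i, \<sigma> i)) = (\<Prod>i = 0..<m. c i * A $$ (i, \<sigma> i))"
      by (rule prod.cong) (use s permutes_in_image in auto)
    then show "of_int (sign \<sigma>) * (\<Prod>i = 0..<m. mat m m (\<lambda>(i,j). c i * A $$ (i,j)) $$ (i, \<sigma> i)) =
      prod c {0..<m} * (of_int (sign \<sigma>) * (\<Prod>i = 0..<m. A $$ (i, \<sigma> i)))"
      by (simp add: prod.distrib)
  qed simp
qed

lemma det_cnj: assumes A: "A \<in> carrier_mat m m" shows "det (map_mat cnj A) = cnj (det A)"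
proof -
  have B: "map_mat cnj A \<in> carrier_mat m m" using A by simp
  show ?thesis unfolding det_def'[OF A] det_def'[OF B] cnj_sum complex_cnj_mult cnj_prod
  proof (rule sum.cong)
    fix \<sigma> assume s: "\<sigma> \<in> {\<sigma>. \<sigma> permutes {0..<m}}"
    have "(\<Prod>i = 0..<m. map_mat cnj A $$ (i, \<sigma> i)) = (\<Prod>i = 0..<m. cnj (A $$ (i, \<sigma> i)))"
      by (rule prod.cong) (use s permutes_in_image A in auto)
    then show "of_int (sign \<sigma>) * (\<Prod>i = 0..<m. map_mat cnj A $$ (i, \<sigma> i)) =
      cnj (of_int (sign \<sigma>)) * (\<Prod>i = 0..<m. cnj (A $$ (i, \<sigma> i)))" by simp
  qed simp
qed

lemma det_rev: assumes A: "A \<in> carrier_mat m m"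
  shows "det (mat m m (\<lambda>(i,j). A $$ (m - 1 - i, m - 1 - j))) = det A"
proof -
  define \<rho> where "\<rho> i = (if i < m then m - 1 - i else i)" for i
  have rp: "\<rho> permutes {0..<m}"
  proof (rule bij_imp_permutes)
    show "bij_betw \<rho> {0..<m} {0..<m}"
      by (rule bij_betw_byWitness[of _ \<rho>]) (auto simp: \<rho>_def)
  qed (auto simp: \<rho>_def)
  define B where "B = mat m m (\<lambda>(i,j). A $$ (\<rho> i, j))"
  have B: "B \<in> carrier_mat m m" by (simp add: B_def)
  have dB: "det B = signof \<rho> * det A" unfolding B_def by (rule det_permute_rows[OF A rp])
  have tB: "transpose_mat B \<in> carrier_mat m m" using B by simp
  have "det (mat m m (\<lambda>(i,j). transpose_mat B $$ (\<rho> i, j))) = signof \<rho> * det (transpose_mat B)"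
    by (rule det_permute_rows[OF tB rp])
  also have "det (transpose_mat B) = det B" by (rule det_transpose[OF B])
  also have "mat m m (\<lambda>(i,j). transpose_mat B $$ (\<rho> i, j)) = transpose_mat (mat m m (\<lambda>(i,j). A $$ (m - 1 - i, m - 1 - j)))"
    by (rule eq_matI) (auto simp: B_def \<rho>_def)
  also have "det (transpose_mat (mat m m (\<lambda>(i,j). A $$ (m - 1 - i, m - 1 - j)))) = det (mat m m (\<lambda>(i,j). A $$ (m - 1 - i, m - 1 - j)))"
    by (rule det_transpose[of _ m]) simp
  finally show ?thesis using dB by (simp add: sign_def)
qed

locale spt =
  fixes k n :: nat and p :: "nat \<Rightarrow> complex"
  assumes kpos: "0 < k" and kn: "k < n" and sp: "p \<in> qh_spec k n"
begin

abbreviation "l \<equiv> n - k"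
definition hh where "hh j = h_fun p j"
definition q :: "nat \<Rightarrow> complex" where "q s = (if s \<le> l then (-1)^s * hh s else 0)"

lemma p0: "p 0 = 1" and pbig: "i > k \<Longrightarrow> p i = 0"
  and hz: "j \<in> {l+1..<n} \<Longrightarrow> hh j = 0" and hn: "hh n + (-1)^k = 0"
  using sp by (auto simp: qh_spec_def hh_def)

lemma lpos: "l \<ge> 1" using kn by auto

lemma hrec: "0 < N \<Longrightarrow> (\<Sum>s\<le>N. (-1)^s * hh s * p (N - s)) = 0"
proof -
  assume "0 < N"
  then obtain M where N: "N = Suc M" by (cases N) auto
  define X where "X = (\<Sum>s<N. (-1)^s * hh s * p (N - s))"
  have "hh N = (\<Sum>i=1..N. (-1) ^ (i + 1) * p i * hh (N - i))"
    unfolding hh_def N by (rule h_fun_Suc)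
  also have "\<dots> = (\<Sum>i<N. (-1) ^ (N - i + 1) * p (N - i) * hh i)"
  proof -
    have "(\<Sum>i=1..N. (-1) ^ (i + 1) * p i * hh (N - i)) = (\<Sum>i<N. (-1) ^ (N - Suc i + 1 + 1) * p (N - Suc i + 1) * hh (N - (N - Suc i + 1)))"
    proof -
      have "(\<Sum>i=1..N. (-1) ^ (i + 1) * p i * hh (N - i)) = (\<Sum>i<N. (-1) ^ (i + 1 + 1) * p (i+1) * hh (N - (i+1)))"
        by (subst sum_bounds_lt_plus1[symmetric]) simp
      also have "\<dots> = (\<Sum>i<N. (-1) ^ (N - Suc i + 1 + 1) * p (N - Suc i + 1) * hh (N - (N - Suc i + 1)))"
        by (rule sum.nat_diff_reindex[symmetric])
      finally show ?thesis .
    qed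
    also have "\<dots> = (\<Sum>i<N. (-1) ^ (N - i + 1) * p (N - i) * hh i)"
      by (rule sum.cong) (auto simp: Suc_diff_Suc)
    finally show ?thesis .
  qed
  also have "\<dots> = (- ((-1)^N)) * X"
    unfolding X_def sum_distrib_left
  proof (rule sum.cong)
    fix i assume "i \<in> {..<N}"
    then have "(-1::complex) ^ (N - i + 1) = (- ((-1)^N)) * (-1)^i"
      by (smt (verit) diff_add_inverse lessThan_iff less_imp_le_nat minus_one_mult_self mult.assoc mult.commute mult_minus1 neg_one_power_add_eq_neg_one_power_diff power_add power_one_right)
    then show "(-1) ^ (N - i + 1) * p (N - i) * hh i = (- ((-1) ^ N)) * ((-1) ^ i * hh i * p (N - i))"
      by simp
  qed simp
  finally have hN: "hh N = (- ((-1)^N)) * X" .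
  have "(\<Sum>s\<le>N. (-1)^s * hh s * p (N - s)) = X + (-1)^N * hh N * p 0"
    unfolding X_def by (simp add: lessThan_Suc_atMost[symmetric] N)
  also have "\<dots> = 0" using hN p0 by (simp add: power_mult_distrib[symmetric] )
  finally show ?thesis .
qed


lemma q_eq: "s < n \<Longrightarrow> q s = (-1)^s * hh s"
  using hz[of s] by (auto simp: q_def)

lemma q0: "q 0 = 1" by (simp add: q_def hh_def h_fun_0)

lemma conv: "(\<Sum>s\<le>N. q s * p (N - s)) = (if N = 0 then 1 else if N = n then (-1)^l else 0)"
proof -
  consider "N = 0" | "0 < N" "N < n" | "N = n" | "N > n" by linarith
  then show ?thesis
  proof cases
    case 1 then show ?thesis by (simp add: q0 p0)
  next
    case 2
    have "(\<Sum>s\<le>N. q s * p (N - s)) = (\<Sum>s\<le>N. (-1)^s * hh s * p (N - s))"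
      by (rule sum.cong) (use 2 in \<open>auto simp: q_eq\<close>)
    then show ?thesis using hrec[of N] 2 by simp
  next
    case 3
    have "(\<Sum>s\<le>N. q s * p (N - s)) = (\<Sum>s<N. q s * p (N - s)) + q N * p 0"
      by (simp add: lessThan_Suc_atMost[symmetric] 3 del: lessThan_Suc)
    also have "q N = 0" using 3 kpos kn by (auto simp: q_def)
    also have "(\<Sum>s<N. q s * p (N - s)) = (\<Sum>s\<le>N. (-1)^s * hh s * p (N - s)) - (-1)^N * hh N * p 0"
    proof -
      have "(\<Sum>s<N. q s * p (N - s)) = (\<Sum>s<N. (-1)^s * hh s * p (N - s))"
        by (rule sum.cong) (use 3 in \<open>auto simp: q_eq\<close>)
      moreover have "(\<Sum>s\<le>N. (-1)^s * hh s * p (N - s)) = (\<Sum>s<N. (-1)^s * hh s * p (N - s)) + (-1)^N * hh N * p 0"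
        by (simp add: lessThan_Suc_atMost[symmetric] del: lessThan_Suc)
      ultimately show ?thesis by simp
    qed
    also have "\<dots> = (- ((-1)^N)) * hh N" using hrec[of N] 3 kn p0 by simp
    also have "\<dots> = (-1)^l"
    proof -
      have "hh N = - ((-1)^k)" using hn 3 by (simp add: eq_neg_iff_add_eq_0)
      then have "(- ((-1)^N)) * hh N = (-1)^(N+k)" by (simp add: power_add)
      also have "N + k = l + 2 * k" using 3 kn by simp
      finally show ?thesis by (simp add: power_add power_mult)
    qed
    finally show ?thesis using 3 kn by simp
  next
    case 4
    have "(\<Sum>s\<le>N. q s * p (N - s)) = 0"
        by (rule sum.neutral) (use 4 kn in \<open>auto simp: q_def intro!: pbig\<close>)
    then show ?thesis using 4 by simp
  qed
qed

lemma pk_ql: "q l * p k = (-1)^l"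
proof -
  have "(\<Sum>s\<le>n. q s * p (n - s)) = (-1)^l" using conv[of n] kn by simp
  moreover have "(\<Sum>s\<le>n. q s * p (n - s)) = q l * p k"
  proof (rule trans[OF sum.mono_neutral_right[of "{..n}" "{l}"]])
    show "\<forall>i\<in>{..n} - {l}. q i * p (n - i) = 0" using kn by (auto simp: q_def intro!: pbig)
  qed (use kn in auto)
  ultimately show ?thesis by simp
qed

lemma pk_nz: "p k \<noteq> 0" using pk_ql by auto

lemma hl_pk: "hh l * p k = 1"
  using pk_ql by (simp add: q_def)


definition EP :: "complex poly" where "EP = (\<Sum>i\<le>k. monom (p i) i)"
definition QP :: "complex poly" where "QP = (\<Sum>s\<le>l. monom (q s) s)"

lemma coeff_EP: "coeff EP i = p i"
  unfolding EP_def by (auto simp: coeff_sum pbig)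

lemma coeff_QP: "coeff QP i = q i"
  unfolding QP_def by (auto simp: coeff_sum q_def)

lemma QP_EP: "QP * EP = 1 + monom ((-1)^l) n"
proof (rule poly_eqI)
  fix N
  have "coeff (QP * EP) N = (\<Sum>s\<le>N. q s * p (N - s))"
    by (simp add: coeff_mult coeff_EP coeff_QP)
  also have "\<dots> = coeff (1 + monom ((-1)^l) n) N"
    using kn by (simp add: conv coeff_monom coeff_1)
  finally show "coeff (QP * EP) N = coeff (1 + monom ((-1)^l) n) N" .
qed

lemma EP_root: "poly EP y = 0 \<Longrightarrow> cmod y = 1"
proof -
  assume "poly EP y = 0"
  then have "poly (QP * EP) y = 0" by simp
  then have "1 + (-1)^l * y^n = 0" by (simp add: QP_EP poly_monom)
  then have "(-1)^l * y^n = -1" by (simp add: add_eq_0_iff)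
  then have "cmod ((-1)^l * y^n) = 1" by simp
  then have "cmod y ^ n = 1" by (simp add: norm_mult norm_power)
  then show "cmod y = 1" using kn
    by (intro power_eq_imp_eq_base[of _ n 1]) auto
qed

lemma EP_nz: "EP \<noteq> 0" using coeff_EP[of 0] p0 by auto

lemma deg_EP: "degree EP = k"
proof (rule antisym)
  show "degree EP \<le> k" by (rule degree_le) (auto simp: coeff_EP pbig)
  show "k \<le> degree EP" by (rule le_degree) (simp add: coeff_EP pk_nz)
qed


lemma p_conj: "i \<le> k \<Longrightarrow> cnj (p i) = p (k - i) / p k"
proof -
  assume i: "i \<le> k"
  obtain K where K: "reflect_poly EP = smult K (map_poly cnj EP)"
    using refl_conj[OF EP_nz EP_root] by blast
  have c: "\<And>j. coeff (reflect_poly EP) j = K * cnj (p j)"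
    by (simp add: K coeff_map_poly coeff_EP)
  from c[of 0] have "p k = K" by (simp add: coeff_reflect_poly deg_EP coeff_EP p0)
  with c[of i] i have "p (k - i) = p k * cnj (p i)" by (simp add: coeff_reflect_poly deg_EP coeff_EP)
  then show ?thesis using pk_nz by (simp add: field_simps)
qed

definition eps :: "int \<Rightarrow> complex" where "eps m = e_int p m"

lemma eps_conj: "cnj (eps m) = eps (int k - m) / p k"
proof -
  consider "m < 0" | "m > int k" | "0 \<le> m" "m \<le> int k" by linarith
  then show ?thesis
  proof cases
    case 1 then show ?thesis by (simp add: eps_def e_int_def pbig nat_diff_distrib)
  next
    case 2 then show ?thesis by (simp add: eps_def e_int_def pbig)
  next
    case 3
    then have "nat (int k - m) = k - nat m" by linarith
    then show ?thesis using 3 p_conj[of "nat m"] by (simp add: eps_def e_int_def)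
  qed
qed

lemma eps_big: "m > int k \<Longrightarrow> eps m = 0" by (simp add: eps_def e_int_def pbig)
lemma eps_neg: "m < 0 \<Longrightarrow> eps m = 0" by (simp add: eps_def e_int_def)
lemma eps_nat: "eps (int i) = p i" by (simp add: eps_def e_int_def)


lemma conv_int: "(\<Sum>s\<le>l. q s * eps (int N - int s)) = (\<Sum>s\<le>N. q s * p (N - s))"
proof -
  have "(\<Sum>s\<le>l. q s * eps (int N - int s)) = (\<Sum>s\<le>l+N. q s * eps (int N - int s))"
    by (rule sum.mono_neutral_left) (auto simp: q_def)
  also have "\<dots> = (\<Sum>s\<le>N. q s * eps (int N - int s))"
    by (rule sum.mono_neutral_right) (auto simp: eps_neg)
  also have "\<dots> = (\<Sum>s\<le>N. q s * p (N - s))"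
    by (rule sum.cong) (auto simp: eps_nat[symmetric] of_nat_diff)
  finally show ?thesis .
qed

definition cc :: complex where "cc = (-1)^(l+1)"
definition u :: "int \<Rightarrow> complex" where "u m = (if m < int n then eps m else cc * eps (m - int n))"

lemma u_rec: assumes "1 \<le> P" "P \<le> int n + int l - 1"
  shows "(\<Sum>s\<le>l. q s * u (P - int s)) = 0"
proof (cases "P < int n")
  case True
  define N where "N = nat P"
  have PN: "P = int N" using assms N_def by simp
  have "(\<Sum>s\<le>l. q s * u (P - int s)) = (\<Sum>s\<le>l. q s * eps (int N - int s))"
    by (rule sum.cong) (use True PN in \<open>auto simp: u_def\<close>)
  also have "\<dots> = 0" unfolding conv_int conv using PN True assms by auto
  finally show ?thesis .
next
  case False
  define N where "N = nat (P - int n)"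
  have PN: "P = int n + int N" and Nl: "N < l" using assms False kn N_def by auto
  have tm: "q s * u (P - int s) = cc * (q s * eps (int N - int s)) + (if s = l \<and> N = 0 then q l * p k else 0)"
    if s: "s \<le> l" for s
  proof (cases "s \<le> N")
    case True
    then show ?thesis using PN lpos by (auto simp: u_def)
  next
    case False
    have e1: "eps (int N - int s) = 0" using False by (simp add: eps_neg)
    have "u (P - int s) = eps (P - int s)" using PN False by (simp add: u_def)
    also have "\<dots> = (if s = l \<and> N = 0 then p k else 0)"
    proof (cases "s = l \<and> N = 0")
      case True
      then have "P - int s = int k" using PN kn by simp
      then show ?thesis using True by (simp add: eps_nat)
    next
      case F2: False
      then have "P - int s > int k" using PN kn s False by auto
      then show ?thesis using F2 by (simp only: eps_big if_False)
    qed
    finally show ?thesis using e1 by auto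
  qed
  have "(\<Sum>s\<le>l. q s * u (P - int s)) = (\<Sum>s\<le>l. cc * (q s * eps (int N - int s)) + (if s = l \<and> N = 0 then q l * p k else 0))"
    by (rule sum.cong) (use tm in auto)
  also have "\<dots> = cc * (\<Sum>s\<le>l. q s * eps (int N - int s)) + (if N = 0 then q l * p k else 0)"
    by (simp add: sum.distrib sum_distrib_left)
  also have "\<dots> = 0" unfolding conv_int conv using Nl kn pk_ql by (auto simp: cc_def)
  finally show ?thesis .
qed


lemma u_eps: "m < int n \<Longrightarrow> u m = eps m" by (simp add: u_def)
lemma cc_sq: "cc * cc = 1" by (simp add: cc_def power_mult_distrib[symmetric])
lemma u_shift: assumes "1 - int l \<le> m" shows "eps m = cc * u (int n + m)"
proof (cases "m < 0")
  case True
  have "int n + m > int k" using assms kn by linarith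
  then show ?thesis using True by (simp add: u_def eps_neg eps_big)
next
  case False
  then show ?thesis using cc_sq by (simp add: u_def mult.assoc[symmetric])
qed

definition CM :: "complex mat" where
  "CM = mat l l (\<lambda>(i,j). if j < l - 1 then (if i = j + 1 then 1 else 0) else - q (l - i))"
definition WM :: "(nat \<Rightarrow> int) \<Rightarrow> nat \<Rightarrow> complex mat" where
  "WM a t = mat l l (\<lambda>(i,j). u (a i + int t + int j))"

lemma CM_carrier: "CM \<in> carrier_mat l l" by (simp add: CM_def)
lemma WM_carrier: "WM a t \<in> carrier_mat l l" by (simp add: WM_def)

lemma sum_rev_shift: "(\<Sum>s\<le>l. f s) = f 0 + (\<Sum>j<l. f (l - j))"
proof -
  obtain l' where l': "l = Suc l'" using lpos by (cases l) auto
  have "(\<Sum>s\<le>l. f s) = f 0 + (\<Sum>i\<le>l'. f (Suc i))" unfolding l' by (rule sum.atMost_Suc_shift)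
  also have "(\<Sum>i\<le>l'. f (Suc i)) = (\<Sum>i<l. f (Suc i))" unfolding l' lessThan_Suc_atMost ..
  also have "\<dots> = (\<Sum>i<l. f (Suc (l - Suc i)))" by (rule sum.nat_diff_reindex[symmetric])
  also have "\<dots> = (\<Sum>i<l. f (l - i))" by (rule sum.cong) (auto simp: Suc_diff_Suc)
  finally show ?thesis .
qed

lemma WM_step: assumes a: "\<And>i. i < l \<Longrightarrow> 1 - int l \<le> a i \<and> a i \<le> int k" and t: "t < l"
  shows "WM a (Suc t) = WM a t * CM"
proof (rule eq_matI)
  fix i j assume i: "i < dim_row (WM a t * CM)" and j: "j < dim_col (WM a t * CM)"
  then have il: "i < l" and jl: "j < l" by (auto simp: WM_def CM_def)
  have "(WM a t * CM) $$ (i, j) = (\<Sum>j'<l. u (a i + int t + int j') * CM $$ (j', j))"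
    using il jl by (simp add: WM_def CM_def scalar_prod_def atLeast0LessThan)
  also have "\<dots> = u (a i + int (Suc t) + int j)"
  proof (cases "j < l - 1")
    case True
    have "(\<Sum>j'<l. u (a i + int t + int j') * CM $$ (j', j)) = (\<Sum>j'<l. if j' = j + 1 then u (a i + int t + int j') else 0)"
      by (rule sum.cong) (use True in \<open>auto simp: CM_def\<close>)
    also have "\<dots> = u (a i + int (Suc t) + int j)"
    proof -
      have "Suc j < l" using True by simp
      then show ?thesis by (simp add: ac_simps)
    qed
    finally show ?thesis .
  next
    case False
    then have jj: "j = l - 1" using jl by simp
    define P where "P = a i + int t + int l"
    have "(\<Sum>s\<le>l. q s * u (P - int s)) = 0"
      by (rule u_rec) (use a[OF il] t kn in \<open>auto simp: P_def\<close>)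
    then have "q 0 * u P + (\<Sum>j'<l. q (l - j') * u (P - int (l - j'))) = 0"
      unfolding sum_rev_shift by simp
    then have "u P = - (\<Sum>j'<l. q (l - j') * u (P - int (l - j')))" using q0
      by (simp add: add_eq_0_iff)
    also have "(\<Sum>j'<l. q (l - j') * u (P - int (l - j'))) = (\<Sum>j'<l. q (l - j') * u (a i + int t + int j'))"
      by (rule sum.cong) (auto simp: P_def of_nat_diff ac_simps)
    finally have uP: "u P = - (\<Sum>j'<l. q (l - j') * u (a i + int t + int j'))" .
    have "(\<Sum>j'<l. u (a i + int t + int j') * CM $$ (j', j)) = (\<Sum>j'<l. - (q (l - j') * u (a i + int t + int j')))"
      by (rule sum.cong) (use jj in \<open>auto simp: CM_def\<close>)
    also have "\<dots> = u P" unfolding uP sum_negf ..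
    also have "P = a i + int (Suc t) + int j" using jj lpos unfolding P_def by simp
    finally show ?thesis .
  qed
  finally show "WM a (Suc t) $$ (i, j) = (WM a t * CM) $$ (i, j)" using il jl by (simp add: WM_def)
qed (auto simp: WM_def CM_def)

lemma WM_det: assumes a: "\<And>i. i < l \<Longrightarrow> 1 - int l \<le> a i \<and> a i \<le> int k"
  shows "t \<le> l \<Longrightarrow> det (WM a t) = det (WM a 0) * det CM ^ t"
proof (induct t)
  case (Suc t)
  have "WM a (Suc t) = WM a t * CM" by (rule WM_step) (use a Suc in auto)
  then have "det (WM a (Suc t)) = det (WM a t) * det CM"
    using det_mult[OF WM_carrier CM_carrier] by simp
  then show ?case using Suc by simp
qed simp


lemma det_CM: "det CM = hh l"
proof -
  obtain l' where l': "l = Suc l'" using lpos by (cases l) auto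
  have "det CM = (\<Sum>i<l. CM $$ (i, l - 1) * cofactor CM i (l - 1))"
    by (rule laplace_expansion_column[OF CM_carrier]) (use lpos in auto)
  also have "\<dots> = (\<Sum>i\<in>{0}. CM $$ (i, l - 1) * cofactor CM i (l - 1))"
  proof (rule sum.mono_neutral_right, goal_cases)
    case 3
    show ?case proof
    fix i assume "i \<in> {..<l} - {0}"
    then have i: "i \<in> {..<l}" "i \<noteq> 0" by auto
    have "det (mat_delete CM i (l - 1)) = 0"
    proof (rule det_zero_row[of _ l' 0])
      show "mat_delete CM i (l - 1) \<in> carrier_mat l' l'" using mat_delete_carrier[OF CM_carrier] l' by simp
      show "0 < l'" using i l' by auto
      fix j assume "j < l'"
      then show "mat_delete CM i (l - 1) $$ (0, j) = 0" using i l' by (simp add: mat_delete_def CM_def)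
    qed
    then show "CM $$ (i, l - 1) * cofactor CM i (l - 1) = 0" by (simp add: cofactor_def)
  qed
  qed (use lpos in auto)
  also have "\<dots> = CM $$ (0, l - 1) * cofactor CM 0 (l - 1)" by simp
  also have "mat_delete CM 0 (l - 1) = 1\<^sub>m l'"
    by (rule eq_matI) (auto simp: mat_delete_def CM_def l')
  then have "cofactor CM 0 (l - 1) = (-1)^l'" by (simp add: cofactor_def l')
  also have "CM $$ (0, l - 1) = - q l" using lpos by (simp add: CM_def)
  finally show ?thesis by (simp add: q_def l')
qed


context
  fixes lam assumes lamY: "lam \<in> young_diagrams k n"
begin

lemma lam_len: "length lam = l" and lam_sorted: "\<And>i j. i \<le> j \<Longrightarrow> j < l \<Longrightarrow> lam ! j \<le> lam ! i"
  and lam_le: "\<And>i. i < l \<Longrightarrow> lam ! i \<le> k"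
proof -
  show len: "length lam = l" using lamY by (simp add: young_diagrams_def)
  show "\<And>i. i < l \<Longrightarrow> lam ! i \<le> k" using lamY len by (auto simp: young_diagrams_def)
  fix i j assume "i \<le> j" "j < l"
  then show "lam ! j \<le> lam ! i" using lamY len
    by (cases "i = j") (auto simp: young_diagrams_def sorted_wrt_iff_nth_less)
qed

definition "dd = durfee lam"
definition "DS = {i \<in> {1..length lam}. part lam i \<ge> i} \<union> {0}"

lemma DS_fin: "finite DS" by (simp add: DS_def)
lemma dd_in: "dd \<in> DS" unfolding dd_def durfee_def DS_def[symmetric] using DS_fin by (intro Max_in) (auto simp: DS_def)
lemma dd_ge: "x \<in> DS \<Longrightarrow> x \<le> dd" unfolding dd_def durfee_def DS_def[symmetric] using DS_fin by (intro Max_ge)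

lemma dd_le_l: "dd \<le> l" using dd_in lam_len by (auto simp: DS_def)
lemma dd_pos: "0 < dd \<Longrightarrow> lam ! (dd - 1) \<ge> dd" using dd_in by (auto simp: DS_def part_def)
lemma dd_le_k: "dd \<le> k"
proof (cases "dd = 0")
  case False
  then show ?thesis using dd_pos lam_le[of "dd - 1"] dd_le_l by fastforce
qed simp
lemma dd_above: assumes "dd \<le> i" "i < l" shows "lam ! i \<le> dd"
proof -
  have "\<not> lam ! dd \<ge> dd + 1"
  proof
    assume "lam ! dd \<ge> dd + 1"
    then have "dd + 1 \<in> DS" using assms lam_len by (auto simp: DS_def part_def)
    then show False using dd_ge by fastforce
  qed
  then show ?thesis using lam_sorted[of dd i] assms by simp
qed
lemma dd_below: assumes "i < dd" shows "lam ! i \<ge> dd"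
  using dd_pos lam_sorted[of i "dd - 1"] assms dd_le_l by fastforce

definition "mu = bar_diagram k n lam"

lemma mu_len: "length mu = l" by (simp add: mu_def bar_diagram_def Let_def del: upt_Suc)

lemma mu_nth: "i < l \<Longrightarrow> mu ! i = (if i < dd then dd + k - lam ! (dd - 1 - i) else dd - lam ! (l - 1 - i + dd))"
  unfolding mu_def bar_diagram_def dd_def[symmetric] Let_def
  by (auto simp: part_def nth_append simp del: upt_Suc intro!: arg_cong[where f="(!) lam"])

lemma mu_Y: "mu \<in> young_diagrams k n"
proof -
  have le: "mu ! i \<le> k" if "i < l" for i
  proof (cases "i < dd")
    case True
    then show ?thesis using that mu_nth dd_below[of "dd - 1 - i"] by auto
  next
    case False
    then show ?thesis using that mu_nth dd_le_k by auto
  qed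
  have so: "mu ! j \<le> mu ! i" if "i < j" "j < l" for i j
  proof -
    consider "j < dd" | "i < dd" "dd \<le> j" | "dd \<le> i" using \<open>i < j\<close> by linarith
    then show ?thesis
    proof cases
      case 1
      have "lam ! (dd - 1 - i) \<le> lam ! (dd - 1 - j)" using lam_sorted[of "dd - 1 - j" "dd - 1 - i"] 1 that dd_le_l by auto
      then show ?thesis using that mu_nth 1 by (simp add: diff_le_mono2)
    next
      case 2
      have "lam ! (dd - 1 - i) \<le> k" using lam_le[of "dd - 1 - i"] 2 dd_le_l by auto
      then have "dd \<le> mu ! i" using mu_nth[of i] 2 that by auto
      moreover have "mu ! j \<le> dd" using mu_nth[of j] 2 that by auto
      ultimately show ?thesis by simp
    next
      case 3
      have "lam ! (l - 1 - i + dd) \<le> lam ! (l - 1 - j + dd)" using lam_sorted[of "l - 1 - j + dd" "l - 1 - i + dd"] 3 that dd_le_l by auto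
      then show ?thesis using that mu_nth 3 by (simp add: diff_le_mono2)
    qed
  qed
  show ?thesis using le so mu_len by (auto simp: young_diagrams_def sorted_wrt_iff_nth_less in_set_conv_nth)
qed


definition "sc j = int k - int (lam ! (l - 1 - j)) - int j"
definition "SC = mat l l (\<lambda>(i,j). eps (sc i + int j))"

lemma sc_bounds: assumes i: "i < l" shows "1 - int l \<le> sc i \<and> sc i \<le> int k"
proof -
  have "lam ! (l - 1 - i) \<le> k" using lam_le[of "l - 1 - i"] i by auto
  then show ?thesis using i unfolding sc_def by linarith
qed

lemma SC_carrier: "SC \<in> carrier_mat l l" by (simp add: SC_def)

lemma partA: "cnj (schubert_val k n lam p) = det SC / p k ^ l"
proof -
  define AL where "AL = mat l l (\<lambda>(i,j). eps (int (lam ! i) + int j - int i))"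
  define NN where "NN = mat l l (\<lambda>(i,j). eps (int k - (int (lam ! i) + int j - int i)))"
  have sv: "schubert_val k n lam p = det AL" by (simp add: schubert_val_def AL_def eps_def)
  have "map_mat cnj AL = (1 / p k) \<cdot>\<^sub>m NN"
    by (rule eq_matI) (auto simp: AL_def NN_def eps_conj)
  then have "cnj (det AL) = (1 / p k) ^ l * det NN"
    using det_cnj[of AL l] by (simp add: AL_def NN_def)
  also have "NN = mat l l (\<lambda>(i,j). SC $$ (l - 1 - i, l - 1 - j))"
    by (rule eq_matI) (auto simp: NN_def SC_def sc_def of_nat_diff intro!: arg_cong[where f=eps])
  also have "det \<dots> = det SC" by (rule det_rev[OF SC_carrier])
  finally show ?thesis using sv by (simp add: field_simps)
qed


lemma partB: "schubert_val k n mu p = det SC / p k ^ l"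
proof -
  define R where "R = mat l l (\<lambda>(i,j). WM sc l $$ (if i < dd then i + (l - dd) else i - dd, j))"
  define cf where "cf i = (if i < dd then 1 else cc)" for i
  have dl: "dd \<le> l" by (rule dd_le_l)
  have MU: "mat l l (\<lambda>(i,j). eps (int (mu ! i) + int j - int i)) = mat l l (\<lambda>(i,j). cf i * R $$ (i,j))"
  proof (rule eq_matI)
    fix i j assume "i < dim_row (mat l l (\<lambda>(i,j). cf i * R $$ (i,j)))" "j < dim_col (mat l l (\<lambda>(i,j). cf i * R $$ (i,j)))"
    then have i: "i < l" and j: "j < l" by auto
    show "mat l l (\<lambda>(i,j). eps (int (mu ! i) + int j - int i)) $$ (i, j) = mat l l (\<lambda>(i,j). cf i * R $$ (i,j)) $$ (i, j)"
    proof (cases "i < dd")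
      case True
      have ix: "l - 1 - (i + (l - dd)) = dd - 1 - i" using True dl by simp
      have lk: "lam ! (dd - 1 - i) \<le> k" using lam_le[of "dd - 1 - i"] True dl by simp
      have mi: "int (mu ! i) = int dd + int k - int (lam ! (dd - 1 - i))" using mu_nth[OF i] True lk by simp
      have arg: "sc (i + (l - dd)) + int l + int j = int (mu ! i) + int j - int i"
        unfolding sc_def ix mi using True dl by simp
      have mk: "mu ! i \<le> k" using mu_Y i mu_len by (auto simp: young_diagrams_def)
      have "R $$ (i, j) = WM sc l $$ (i + (l - dd), j)" using True i j by (simp add: R_def)
      also have "\<dots> = u (sc (i + (l - dd)) + int l + int j)" using True i j dl by (simp add: WM_def)
      also have "\<dots> = u (int (mu ! i) + int j - int i)" by (simp only: arg)
      also have "\<dots> = eps (int (mu ! i) + int j - int i)" using mk j kn by (intro u_eps) linarith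
      finally show ?thesis using i j True by (simp add: cf_def)
    next
      case False
      have ix: "l - 1 - (i - dd) = l - 1 - i + dd" using False i by simp
      have ld: "lam ! (l - 1 - i + dd) \<le> dd" using dd_above[of "l - 1 - i + dd"] i False by simp
      have mi: "int (mu ! i) = int dd - int (lam ! (l - 1 - i + dd))" using mu_nth[OF i] False ld by simp
      have arg: "sc (i - dd) + int l + int j = int n + (int (mu ! i) + int j - int i)"
        unfolding sc_def ix mi using False kn by simp
      have "R $$ (i, j) = WM sc l $$ (i - dd, j)" using False i j by (simp add: R_def)
      also have "\<dots> = u (sc (i - dd) + int l + int j)" using False i j dl by (simp add: WM_def)
      also have "\<dots> = u (int n + (int (mu ! i) + int j - int i))" by (simp only: arg)
      finally have "R $$ (i, j) = u (int n + (int (mu ! i) + int j - int i))" .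
      moreover have "eps (int (mu ! i) + int j - int i) = cc * u (int n + (int (mu ! i) + int j - int i))"
        by (rule u_shift) (use i in linarith)
      ultimately show ?thesis using i j False by (simp add: cf_def)
    qed
  qed (auto)
  have sv: "schubert_val k n mu p = det (mat l l (\<lambda>(i,j). eps (int (mu ! i) + int j - int i)))"
    by (simp add: schubert_val_def eps_def)
  have R: "R \<in> carrier_mat l l" by (simp add: R_def)
  have d1: "det (mat l l (\<lambda>(i,j). cf i * R $$ (i,j))) = prod cf {0..<l} * det R"
    by (rule det_scale_rows[OF R])
  have pc: "prod cf {0..<l} = cc ^ (l - dd)"
  proof -
    have "prod cf {0..<l} = prod (\<lambda>_. 1) ({0..<l} \<inter> {i. i < dd}) * prod (\<lambda>_. cc) ({0..<l} \<inter> - {i. i < dd})"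
      unfolding cf_def by (rule prod.If_cases) simp
    also have "{0..<l} \<inter> - {i. i < dd} = {dd..<l}" by auto
    finally show ?thesis by simp
  qed
  have ldd: "dd + (l - dd) = l" using dl by simp
  have WMc: "WM sc l \<in> carrier_mat (dd + (l - dd)) (dd + (l - dd))" unfolding ldd by (rule WM_carrier)
  have d2: "det (WM sc l) = (-1) ^ (dd * (l - dd)) * det R"
    using det_swap_rows[OF WMc] unfolding ldd R_def by simp
  have W0: "WM sc 0 = SC"
  proof (rule eq_matI)
    fix i j assume "i < dim_row SC" "j < dim_col SC"
    then have i: "i < l" and j: "j < l" by (auto simp: SC_def)
    have "sc i + int j < int n" using sc_bounds[OF i] j kn by linarith
    then show "WM sc 0 $$ (i, j) = SC $$ (i, j)" using i j by (simp add: WM_def SC_def u_eps)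
  qed (auto simp: WM_def SC_def)
  have d3: "det (WM sc l) = det SC * hh l ^ l"
    using WM_det[of sc l] sc_bounds W0 by (simp add: det_CM)
  have sg: "cc ^ (l - dd) * (-1) ^ (dd * (l - dd)) = (1::complex)"
  proof -
    have "cc ^ (l - dd) * (-1) ^ (dd * (l - dd)) = (-1::complex) ^ ((l + 1) * (l - dd) + dd * (l - dd))"
      by (simp only: cc_def power_mult power_add)
    also have "even ((l + 1) * (l - dd) + dd * (l - dd))"
    proof -
      have "(l + 1) * (l - dd) + dd * (l - dd) = (l + 1 + dd) * (l - dd)" by (rule add_mult_distrib[symmetric])
      moreover have "even (l - dd) \<or> even (l + 1 + dd)"
      proof -
        have "l + 1 + dd = (l - dd) + 1 + 2 * dd" using dl by simp
        then show ?thesis by (cases "even (l - dd)") auto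
      qed
      ultimately show ?thesis by (metis even_mult_iff)
    qed
    then have "(-1::complex) ^ ((l + 1) * (l - dd) + dd * (l - dd)) = 1" by simp
    finally show ?thesis .
  qed
  have ss: "(-1::complex) ^ (dd * (l - dd)) * (-1) ^ (dd * (l - dd)) = 1"
    by (simp add: power_mult_distrib[symmetric])
  have "det R = (-1) ^ (dd * (l - dd)) * det (WM sc l)" using d2 ss by (simp add: mult.assoc[symmetric])
  then have "schubert_val k n mu p = cc ^ (l - dd) * (-1) ^ (dd * (l - dd)) * (det SC * hh l ^ l)"
    using sv MU d1 pc d3 by (simp add: mult.assoc)
  also have "\<dots> = det SC * hh l ^ l" using sg by simp
  also have "hh l ^ l = 1 / p k ^ l"
  proof -
    have "hh l = 1 / p k" using hl_pk pk_nz by (simp add: eq_divide_eq)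
    then show ?thesis by (simp add: power_one_over)
  qed
  finally show ?thesis by simp
qed

lemma pointwise: "schubert_val k n (bar_diagram k n lam) p = cnj (schubert_val k n lam p)"
  using partA partB by (simp add: mu_def)

end

end

theorem proposition3:
  fixes k n :: nat and D :: "nat list \<Rightarrow> int" and p :: "nat \<Rightarrow> complex"
  assumes "0 < k" and "k < n" and "p \<in> qh_spec k n"
  shows "qh_eval k n (qh_bar k n D) p = cnj (qh_eval k n D p)"
proof -
  interpret spt k n p using assms by unfold_locales
  let ?Y = "young_diagrams k n"
  let ?S = "\<lambda>lam. schubert_val k n lam p"
  let ?b = "bar_diagram k n"
  have finY: "finite ?Y"
  proof (rule finite_subset)
    show "?Y \<subseteq> {xs. set xs \<subseteq> {0..k} \<and> length xs = n - k}" by (auto simp: young_diagrams_def)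
  qed (rule finite_lists_length_eq, simp)
  have barY: "?b ` ?Y \<subseteq> ?Y" using mu_Y by (auto simp: mu_def)
  have "qh_eval k n (qh_bar k n D) p = (\<Sum>m\<in>?Y. of_int (\<Sum>lam\<in>{lam \<in> ?Y. ?b lam = m}. D lam) * ?S m)"
    by (simp add: qh_eval_def qh_bar_def)
  also have "\<dots> = (\<Sum>m\<in>?Y. \<Sum>lam\<in>{lam \<in> ?Y. ?b lam = m}. of_int (D lam) * ?S (?b lam))"
    by (rule sum.cong) (auto simp: of_int_sum sum_distrib_right)
  also have "\<dots> = (\<Sum>lam\<in>?Y. of_int (D lam) * ?S (?b lam))"
    by (rule sum.group[OF finY finY barY])
  also have "\<dots> = (\<Sum>lam\<in>?Y. of_int (D lam) * cnj (?S lam))"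
    by (rule sum.cong) (auto simp: pointwise)
  also have "\<dots> = cnj (qh_eval k n D p)"
    by (simp add: qh_eval_def cnj_sum)
  finally show ?thesis .
qed

end
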